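(* Let $a\in(0,1)$, $p\in(0,1)$, and let $X=(X_t)_{t\ge0}$ be a stationary Markov chain generated by the copula $C(u,v)=a\min(u,v)+(1-a)\max(u+v-1,0)$ and Bernoulli($p$) marginal distribution. Then $X$ is exponentially $\psi$-mixing, i.e. there exist constants $K<\infty$ and $r\in[0,1)$ with $\psi(n)\le K r^n$ for all $n$; consequently $X$ is also exponentially $\phi$-, $\rho$-, $\beta$- and $\alpha$-mixing.
   Context: A stationary Markov chain $(X_t)$ is generated by a copula $C$ and a marginal cdf $F$ if each $X_t$ has cdf $F$ and $P(X_t\le x,X_{t+1}\le y)=C(F(x),F(y))$ for all $x,y$; Bernoulli($p$) means $P(X_t=1)=p=1-P(X_t=0)$. For the stationary Markov chain, the mixing coefficients at lag $n$ are defined with respect to $X_0$ and $X_n$: $\psi(n)=\sup\left|\frac{P(X_0\in A,X_n\in B)}{P(X_0\in A)P(X_n\in B)}-1\right|$ over events $A,B$ with $P(X_0\in A)>0$, $P(X_n\in B)>0$, and $\phi(n)=\sup\left|\frac{P(X_0\in A,X_n\in B)}{P(X_0\in A)}-P(X_n\in B)\right|$ over $A,B$ with $P(X_0\in A)>0$. The chain is $\psi$-mixing (resp. $\phi$-mixing) if $\psi(n)\to0$ (resp. $\phi(n)\to0$) as $n\to\infty$; $\rho$-, $\beta$-, $\alpha$-mixing are the standard notions (maximal correlation, absolute regularity, strong mixing). *)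

theory Defs
  imports "HOL-Probability.Probability"
begin

definition pv :: "'a measure \<Rightarrow> ('a \<Rightarrow> real) \<Rightarrow> real set \<Rightarrow> real" where
  "pv M Y A = measure M (Y -` A \<inter> space M)"

definition pv2 :: "'a measure \<Rightarrow> ('a \<Rightarrow> real) \<Rightarrow> real set \<Rightarrow> ('a \<Rightarrow> real) \<Rightarrow> real set \<Rightarrow> real" where
  "pv2 M Y A Z B = measure M (Y -` A \<inter> Z -` B \<inter> space M)"

definition mix_copula :: "real \<Rightarrow> real \<Rightarrow> real \<Rightarrow> real" where
  "mix_copula a u v = a * min u v + (1 - a) * max (u + v - 1) 0"

definition bernoulli_cdf :: "real \<Rightarrow> real \<Rightarrow> real" where
  "bernoulli_cdf p x = (if x < 0 then 0 else if x < 1 then 1 - p else 1)"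

text \<open>(X_t) is a (discrete-state) Markov chain: the conditional law of X_{t+1} given
  X_0,...,X_t equals that given X_t, written in product form (no division by zero).\<close>
definition markov_chain :: "'a measure \<Rightarrow> (nat \<Rightarrow> 'a \<Rightarrow> real) \<Rightarrow> bool" where
  "markov_chain M X \<longleftrightarrow>
     (\<forall>t (x :: nat \<Rightarrow> real).
        measure M {\<omega> \<in> space M. \<forall>i\<le>Suc t. X i \<omega> = x i} * measure M {\<omega> \<in> space M. X t \<omega> = x t}
      = measure M {\<omega> \<in> space M. \<forall>i\<le>t. X i \<omega> = x i}
        * measure M {\<omega> \<in> space M. X t \<omega> = x t \<and> X (Suc t) \<omega> = x (Suc t)})"

definition copula_markov_chain ::
  "'a measure \<Rightarrow> (nat \<Rightarrow> 'a \<Rightarrow> real) \<Rightarrow> (real \<Rightarrow> real \<Rightarrow> real) \<Rightarrow> (real \<Rightarrow> real) \<Rightarrow> bool" where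
  "copula_markov_chain M X C F \<longleftrightarrow>
     prob_space M \<and> (\<forall>t. X t \<in> borel_measurable M) \<and> markov_chain M X \<and>
     (\<forall>t x. pv M (X t) {..x} = F x) \<and>
     (\<forall>t x y. pv2 M (X t) {..x} (X (Suc t)) {..y} = C (F x) (F y))"

text \<open>Mixing coefficients at lag n, with respect to X_0 and X_n (values in ereal,
  so that an unbounded supremum is \<infinity>).\<close>

definition psi_mix :: "'a measure \<Rightarrow> (nat \<Rightarrow> 'a \<Rightarrow> real) \<Rightarrow> nat \<Rightarrow> ereal" where
  "psi_mix M X n =
    (SUP (A, B) \<in> {(A, B). A \<in> sets borel \<and> B \<in> sets borel \<and>
                          pv M (X 0) A > 0 \<and> pv M (X n) B > 0}.
       ereal \<bar>pv2 M (X 0) A (X n) B / (pv M (X 0) A * pv M (X n) B) - 1\<bar>)"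

definition phi_mix :: "'a measure \<Rightarrow> (nat \<Rightarrow> 'a \<Rightarrow> real) \<Rightarrow> nat \<Rightarrow> ereal" where
  "phi_mix M X n =
    (SUP (A, B) \<in> {(A, B). A \<in> sets borel \<and> B \<in> sets borel \<and> pv M (X 0) A > 0}.
       ereal \<bar>pv2 M (X 0) A (X n) B / pv M (X 0) A - pv M (X n) B\<bar>)"

definition alpha_mix :: "'a measure \<Rightarrow> (nat \<Rightarrow> 'a \<Rightarrow> real) \<Rightarrow> nat \<Rightarrow> ereal" where
  "alpha_mix M X n =
    (SUP (A, B) \<in> {(A, B). A \<in> sets borel \<and> B \<in> sets borel}.
       ereal \<bar>pv2 M (X 0) A (X n) B - pv M (X 0) A * pv M (X n) B\<bar>)"

definition beta_mix :: "'a measure \<Rightarrow> (nat \<Rightarrow> 'a \<Rightarrow> real) \<Rightarrow> nat \<Rightarrow> ereal" where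
  "beta_mix M X n =
    (SUP (k, A, l, B) \<in> {(k :: nat, A :: nat \<Rightarrow> real set, l :: nat, B :: nat \<Rightarrow> real set). (\<forall>i<k. A i \<in> sets borel) \<and> disjoint_family_on A {..<k}
                                     \<and> (\<Union>i<k. A i) = UNIV \<and>
                                     (\<forall>j<l. B j \<in> sets borel) \<and> disjoint_family_on B {..<l}
                                     \<and> (\<Union>j<l. B j) = UNIV}.
       ereal ((1/2) * (\<Sum>i<k. \<Sum>j<l.
           \<bar>pv2 M (X 0) (A i) (X n) (B j) - pv M (X 0) (A i) * pv M (X n) (B j)\<bar>)))"

definition rho_mix :: "'a measure \<Rightarrow> (nat \<Rightarrow> 'a \<Rightarrow> real) \<Rightarrow> nat \<Rightarrow> ereal" where
  "rho_mix M X n =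
    (SUP (f, g) \<in> {(f, g). f \<in> borel_measurable borel \<and> g \<in> borel_measurable borel \<and>
                    integrable M (\<lambda>\<omega>. (f (X 0 \<omega>))\<^sup>2) \<and> integrable M (\<lambda>\<omega>. (g (X n \<omega>))\<^sup>2) \<and>
                    (LINT \<omega>|M. (f (X 0 \<omega>) - (LINT \<eta>|M. f (X 0 \<eta>)))\<^sup>2) > 0 \<and>
                    (LINT \<omega>|M. (g (X n \<omega>) - (LINT \<eta>|M. g (X n \<eta>)))\<^sup>2) > 0}.
       ereal \<bar>(LINT \<omega>|M. (f (X 0 \<omega>) - (LINT \<eta>|M. f (X 0 \<eta>))) * (g (X n \<omega>) - (LINT \<eta>|M. g (X n \<eta>))))
              / sqrt ((LINT \<omega>|M. (f (X 0 \<omega>) - (LINT \<eta>|M. f (X 0 \<eta>)))\<^sup>2)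
                      * (LINT \<omega>|M. (g (X n \<omega>) - (LINT \<eta>|M. g (X n \<eta>)))\<^sup>2))\<bar>)"

definition exp_decay :: "(nat \<Rightarrow> ereal) \<Rightarrow> bool" where
  "exp_decay c \<longleftrightarrow> (\<exists>K r::real. 0 \<le> r \<and> r < 1 \<and> (\<forall>n. c n \<le> ereal (K * r ^ n)))"

end

theory Submission
  imports Defs
begin

locale bchain =
  fixes M :: "'a measure" and X :: "nat \<Rightarrow> 'a \<Rightarrow> real" and a p :: real
  assumes a0: "0 < a" and a1: "a < 1" and p0: "0 < p" and p1: "p < 1"
    and cmc: "copula_markov_chain M X (mix_copula a) (bernoulli_cdf p)"
begin

sublocale prob_space M using cmc by (simp add: copula_markov_chain_def)

lemma meas[measurable]: "X t \<in> borel_measurable M"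
  using cmc by (simp add: copula_markov_chain_def)

lemma cdf: "measure M {\<omega>\<in>space M. X t \<omega> \<le> x} = bernoulli_cdf p x"
proof -
  have "{\<omega>\<in>space M. X t \<omega> \<le> x} = X t -` {..x} \<inter> space M" by auto
  then show ?thesis using cmc by (simp add: copula_markov_chain_def pv_def)
qed

lemma joint: "measure M {\<omega>\<in>space M. X t \<omega> \<le> x \<and> X (Suc t) \<omega> \<le> y}
   = mix_copula a (bernoulli_cdf p x) (bernoulli_cdf p y)"
proof -
  have "{\<omega>\<in>space M. X t \<omega> \<le> x \<and> X (Suc t) \<omega> \<le> y} = X t -` {..x} \<inter> X (Suc t) -` {..y} \<inter> space M" by auto
  then show ?thesis using cmc by (simp add: copula_markov_chain_def pv2_def)
qed

lemma lt_lemma: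
  assumes "\<And>m. measure M {\<omega>\<in>space M. X t \<omega> \<le> x - 1 / Suc m} = v"
  shows "measure M {\<omega>\<in>space M. X t \<omega> < x} = v"
proof -
  let ?A = "\<lambda>m::nat. {\<omega>\<in>space M. X t \<omega> \<le> x - 1 / Suc m}"
  have inc: "incseq ?A"
  proof (rule incseq_SucI)
    fix m
    have "1 / real (Suc (Suc m)) \<le> 1 / real (Suc m)" by (simp add: frac_le)
    then show "?A m \<subseteq> ?A (Suc m)" by auto
  qed
  have U: "(\<Union>m. ?A m) = {\<omega>\<in>space M. X t \<omega> < x}"
  proof safe
    fix \<omega> m assume "X t \<omega> \<le> x - 1 / Suc m"
    moreover have "0 < 1 / real (Suc m)" by simp
    ultimately show "X t \<omega> < x" by linarith
  next
    fix \<omega> assume w: "\<omega> \<in> space M" "X t \<omega> < x"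
    then obtain m where "inverse (real (Suc m)) < x - X t \<omega>"
      using reals_Archimedean[of "x - X t \<omega>"] by auto
    then show "\<omega> \<in> (\<Union>m. ?A m)" using w by (auto simp: field_simps intro!: exI[of _ m])
  qed
  have "(\<lambda>m. measure M (?A m)) \<longlonglongrightarrow> measure M (\<Union>m. ?A m)"
    by (rule Lim_measure_incseq) (use inc in auto)
  then have "(\<lambda>m. v) \<longlonglongrightarrow> measure M (\<Union>m. ?A m)" using assms by simp
  then show ?thesis using U LIMSEQ_unique[OF _ tendsto_const] by metis
qed

lemma P0: "measure M {\<omega>\<in>space M. X t \<omega> = 0} = 1 - p"
proof -
  have lt: "measure M {\<omega>\<in>space M. X t \<omega> < 0} = 0"
  proof (rule lt_lemma)
    fix m :: nat
    have "0 - 1 / real (Suc m) < 0" by simp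
    then show "measure M {\<omega>\<in>space M. X t \<omega> \<le> 0 - 1 / Suc m} = 0"
      by (simp only: cdf) (simp add: bernoulli_cdf_def)
  qed
  have D: "measure M ({\<omega>\<in>space M. X t \<omega> \<le> 0} - {\<omega>\<in>space M. X t \<omega> < 0}) = measure M {\<omega>\<in>space M. X t \<omega> \<le> 0} - measure M {\<omega>\<in>space M. X t \<omega> < 0}"
    by (rule finite_measure_Diff) auto
  have "{\<omega>\<in>space M. X t \<omega> = 0} = {\<omega>\<in>space M. X t \<omega> \<le> 0} - {\<omega>\<in>space M. X t \<omega> < 0}" by auto
  with D have "measure M {\<omega>\<in>space M. X t \<omega> = 0} = measure M {\<omega>\<in>space M. X t \<omega> \<le> 0} - measure M {\<omega>\<in>space M. X t \<omega> < 0}"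
    by simp
  then show ?thesis using lt cdf[of t 0] by (simp add: bernoulli_cdf_def)
qed

lemma P1: "measure M {\<omega>\<in>space M. X t \<omega> = 1} = p"
proof -
  have lt: "measure M {\<omega>\<in>space M. X t \<omega> < 1} = 1 - p"
  proof (rule lt_lemma)
    fix m :: nat
    have "1 - 1 / real (Suc m) < 1" "0 \<le> 1 - 1 / real (Suc m)" by auto
    then show "measure M {\<omega>\<in>space M. X t \<omega> \<le> 1 - 1 / Suc m} = 1 - p"
      by (simp only: cdf) (simp add: bernoulli_cdf_def)
  qed
  have D: "measure M ({\<omega>\<in>space M. X t \<omega> \<le> 1} - {\<omega>\<in>space M. X t \<omega> < 1}) = measure M {\<omega>\<in>space M. X t \<omega> \<le> 1} - measure M {\<omega>\<in>space M. X t \<omega> < 1}"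
    by (rule finite_measure_Diff) auto
  have "{\<omega>\<in>space M. X t \<omega> = 1} = {\<omega>\<in>space M. X t \<omega> \<le> 1} - {\<omega>\<in>space M. X t \<omega> < 1}" by auto
  with D have "measure M {\<omega>\<in>space M. X t \<omega> = 1} = measure M {\<omega>\<in>space M. X t \<omega> \<le> 1} - measure M {\<omega>\<in>space M. X t \<omega> < 1}"
    by simp
  then show ?thesis using lt cdf[of t 1] by (simp add: bernoulli_cdf_def)
qed

lemma AE01: "AE \<omega> in M. X t \<omega> = 0 \<or> X t \<omega> = 1"
proof -
  have "measure M ({\<omega>\<in>space M. X t \<omega> = 0} \<union> {\<omega>\<in>space M. X t \<omega> = 1}) = (1 - p) + p"
    by (subst finite_measure_Union) (auto simp: P0 P1)
  then have "prob {\<omega>\<in>space M. X t \<omega> = 0 \<or> X t \<omega> = 1} = 1"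
    by (simp add: Collect_disj_eq[symmetric] Un_def) (smt (verit) Collect_cong)
  from AE_prob_1[OF this] show ?thesis by auto
qed

lemma AEall: "AE \<omega> in M. \<forall>t. X t \<omega> = 0 \<or> X t \<omega> = 1"
  using AE01 by (simp add: AE_all_countable)


lemma int2:
  assumes [measurable]: "Y \<in> borel_measurable M" "Z \<in> borel_measurable M"
    and ae: "AE \<omega> in M. (Y \<omega> = 0 \<or> Y \<omega> = 1) \<and> (Z \<omega> = 0 \<or> Z \<omega> = 1)"
    and hm: "(\<lambda>\<omega>. h (Y \<omega>) (Z \<omega>)) \<in> borel_measurable M"
  shows "(\<integral>\<omega>. h (Y \<omega>) (Z \<omega>) \<partial>M) =
     (\<Sum>i\<in>{0,1::real}. \<Sum>j\<in>{0,1::real}. h i j * measure M {\<omega>\<in>space M. Y \<omega> = i \<and> Z \<omega> = j})"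
proof -
  have "(\<integral>\<omega>. h (Y \<omega>) (Z \<omega>) \<partial>M) =
     (\<integral>\<omega>. (\<Sum>i\<in>{0,1::real}. \<Sum>j\<in>{0,1::real}. h i j * indicator {\<omega>\<in>space M. Y \<omega> = i \<and> Z \<omega> = j} \<omega>) \<partial>M)"
  proof (rule integral_cong_AE)
    show "(\<lambda>\<omega>. h (Y \<omega>) (Z \<omega>)) \<in> borel_measurable M" by (rule hm)
    show "(\<lambda>\<omega>. \<Sum>i\<in>{0,1::real}. \<Sum>j\<in>{0,1::real}. h i j * indicator {\<omega>\<in>space M. Y \<omega> = i \<and> Z \<omega> = j} \<omega>) \<in> borel_measurable M"
      by measurable
    show "AE \<omega> in M. h (Y \<omega>) (Z \<omega>) = (\<Sum>i\<in>{0,1::real}. \<Sum>j\<in>{0,1::real}. h i j * indicator {\<omega>\<in>space M. Y \<omega> = i \<and> Z \<omega> = j} \<omega>)"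
      using ae AE_space by eventually_elim (auto simp: indicator_def)
  qed
  also have "\<dots> = (\<Sum>i\<in>{0,1::real}. \<Sum>j\<in>{0,1::real}. h i j * measure M {\<omega>\<in>space M. Y \<omega> = i \<and> Z \<omega> = j})"
  proof -
    have I: "integrable M (\<lambda>\<omega>. h i j * indicator {\<omega>\<in>space M. Y \<omega> = i \<and> Z \<omega> = j} \<omega>)" for i j
      by (intro integrable_mult_right integrable_real_indicator) (auto simp: less_top[symmetric])
    have I2: "integrable M (\<lambda>\<omega>. \<Sum>j\<in>{0,1::real}. h i j * indicator {\<omega>\<in>space M. Y \<omega> = i \<and> Z \<omega> = j} \<omega>)" for i
      by (rule Bochner_Integration.integrable_sum) (rule I)
    have J: "(\<integral>\<omega>. h i j * indicator {\<omega>\<in>space M. Y \<omega> = i \<and> Z \<omega> = j} \<omega> \<partial>M) = h i j * measure M {\<omega>\<in>space M. Y \<omega> = i \<and> Z \<omega> = j}" for i j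
      by simp
    have "(\<integral>\<omega>. (\<Sum>i\<in>{0,1::real}. \<Sum>j\<in>{0,1::real}. h i j * indicator {\<omega>\<in>space M. Y \<omega> = i \<and> Z \<omega> = j} \<omega>) \<partial>M)
       = (\<Sum>i\<in>{0,1::real}. (\<integral>\<omega>. (\<Sum>j\<in>{0,1::real}. h i j * indicator {\<omega>\<in>space M. Y \<omega> = i \<and> Z \<omega> = j} \<omega>) \<partial>M))"
      by (rule Bochner_Integration.integral_sum) (rule I2)
    also have "\<dots> = (\<Sum>i\<in>{0,1::real}. \<Sum>j\<in>{0,1::real}. (\<integral>\<omega>. h i j * indicator {\<omega>\<in>space M. Y \<omega> = i \<and> Z \<omega> = j} \<omega> \<partial>M))"
      by (intro sum.cong refl Bochner_Integration.integral_sum I)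
    finally show ?thesis by (simp only: J)
  qed
  finally show ?thesis .
qed


lemma split2:
  assumes "A \<in> sets M" "B \<in> sets M" "C \<in> sets M" "B \<inter> C = {}"
    and "AE \<omega> in M. \<omega> \<in> A \<longleftrightarrow> \<omega> \<in> B \<or> \<omega> \<in> C"
  shows "measure M A = measure M B + measure M C"
proof -
  have "measure M A = measure M (B \<union> C)"
    by (rule finite_measure_eq_AE) (use assms in auto)
  also have "\<dots> = measure M B + measure M C"
    by (rule finite_measure_Union) (use assms in auto)
  finally show ?thesis .
qed

definition q where "q = 1 - p"
definition c where "c = mix_copula a q q"

lemma P00: "measure M {\<omega>\<in>space M. X t \<omega> = 0 \<and> X (Suc t) \<omega> = 0} = c"
proof -
  have "measure M {\<omega>\<in>space M. X t \<omega> = 0 \<and> X (Suc t) \<omega> = 0} = measure M {\<omega>\<in>space M. X t \<omega> \<le> 0 \<and> X (Suc t) \<omega> \<le> 0}"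
  proof (rule finite_measure_eq_AE)
    show "AE \<omega> in M. (\<omega> \<in> {\<omega>\<in>space M. X t \<omega> = 0 \<and> X (Suc t) \<omega> = 0}) = (\<omega> \<in> {\<omega>\<in>space M. X t \<omega> \<le> 0 \<and> X (Suc t) \<omega> \<le> 0})"
      using AEall
    proof eventually_elim
      case (elim \<omega>)
      then have "X t \<omega> = 0 \<or> X t \<omega> = 1" "X (Suc t) \<omega> = 0 \<or> X (Suc t) \<omega> = 1" by auto
      then show ?case by auto
    qed
  qed auto
  also have "\<dots> = c" by (simp add: joint c_def q_def bernoulli_cdf_def)
  finally show ?thesis .
qed

lemma P01: "measure M {\<omega>\<in>space M. X t \<omega> = 0 \<and> X (Suc t) \<omega> = 1} = q - c"
proof -
  have "measure M {\<omega>\<in>space M. X t \<omega> = 0} = measure M {\<omega>\<in>space M. X t \<omega> = 0 \<and> X (Suc t) \<omega> = 0}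
     + measure M {\<omega>\<in>space M. X t \<omega> = 0 \<and> X (Suc t) \<omega> = 1}"
    by (rule split2) (use AEall in \<open>auto elim!: AE_mp\<close>)
  then show ?thesis using P0[of t] P00[of t] by (simp add: q_def)
qed

lemma P10: "measure M {\<omega>\<in>space M. X t \<omega> = 1 \<and> X (Suc t) \<omega> = 0} = q - c"
proof -
  have "measure M {\<omega>\<in>space M. X (Suc t) \<omega> = 0} = measure M {\<omega>\<in>space M. X t \<omega> = 0 \<and> X (Suc t) \<omega> = 0}
     + measure M {\<omega>\<in>space M. X t \<omega> = 1 \<and> X (Suc t) \<omega> = 0}"
    by (rule split2) (use AEall in \<open>auto elim!: AE_mp\<close>)
  then show ?thesis using P0[of "Suc t"] P00[of t] by (simp add: q_def)
qed

lemma P11: "measure M {\<omega>\<in>space M. X t \<omega> = 1 \<and> X (Suc t) \<omega> = 1} = p - (q - c)"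
proof -
  have "measure M {\<omega>\<in>space M. X t \<omega> = 1} = measure M {\<omega>\<in>space M. X t \<omega> = 1 \<and> X (Suc t) \<omega> = 0}
     + measure M {\<omega>\<in>space M. X t \<omega> = 1 \<and> X (Suc t) \<omega> = 1}"
    by (rule split2) (use AEall in \<open>auto elim!: AE_mp\<close>)
  then show ?thesis using P1[of t] P10[of t] by simp
qed

definition Path where "Path n x = {\<omega>\<in>space M. \<forall>m\<le>n. X m \<omega> = x m}"
definition SS where "SS (n::nat) i k = {x \<in> PiE {..n} (\<lambda>_. {0,1::real}). x 0 = i \<and> x n = k}"

lemma Path_sets[measurable]: "Path n x \<in> sets M"
  unfolding Path_def by measurable

lemma SS_finite: "finite (SS n i k)"
  unfolding SS_def by (rule finite_subset[OF _ finite_PiE[of "{..n}" "\<lambda>_. {0,1::real}"]]) auto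

lemma decomp:
  assumes W: "W \<in> sets M"
  shows "measure M ({\<omega>\<in>space M. X 0 \<omega> = i \<and> X n \<omega> = k} \<inter> W) = (\<Sum>x\<in>SS n i k. measure M (Path n x \<inter> W))"
proof -
  have "measure M ({\<omega>\<in>space M. X 0 \<omega> = i \<and> X n \<omega> = k} \<inter> W) = measure M (\<Union>x\<in>SS n i k. Path n x \<inter> W)"
  proof (rule finite_measure_eq_AE)
    show "AE \<omega> in M. (\<omega> \<in> {\<omega>\<in>space M. X 0 \<omega> = i \<and> X n \<omega> = k} \<inter> W) = (\<omega> \<in> (\<Union>x\<in>SS n i k. Path n x \<inter> W))"
      using AEall
    proof eventually_elim
      case (elim \<omega>)
      show ?case
      proof
        assume h: "\<omega> \<in> {\<omega>\<in>space M. X 0 \<omega> = i \<and> X n \<omega> = k} \<inter> W"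
        let ?x = "restrict (\<lambda>m. X m \<omega>) {..n}"
        have "?x \<in> SS n i k" using h elim by (auto simp: SS_def)
        moreover have "\<omega> \<in> Path n ?x \<inter> W" using h by (auto simp: Path_def)
        ultimately show "\<omega> \<in> (\<Union>x\<in>SS n i k. Path n x \<inter> W)" by blast
      next
        assume "\<omega> \<in> (\<Union>x\<in>SS n i k. Path n x \<inter> W)"
        then show "\<omega> \<in> {\<omega>\<in>space M. X 0 \<omega> = i \<and> X n \<omega> = k} \<inter> W"
          by (auto simp: Path_def SS_def)
      qed
    qed
    show "{\<omega>\<in>space M. X 0 \<omega> = i \<and> X n \<omega> = k} \<inter> W \<in> sets M" using W by measurable
    show "(\<Union>x\<in>SS n i k. Path n x \<inter> W) \<in> sets M"
      using W SS_finite by (intro sets.finite_UN) auto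
  qed
  also have "\<dots> = (\<Sum>x\<in>SS n i k. measure M (Path n x \<inter> W))"
  proof (rule measure_finite_Union)
    show "finite (SS n i k)" by (rule SS_finite)
    show "(\<lambda>x. Path n x \<inter> W) ` SS n i k \<subseteq> sets M" using W by auto
    show "disjoint_family_on (\<lambda>x. Path n x \<inter> W) (SS n i k)"
    unfolding disjoint_family_on_def
    proof (intro ballI impI)
      fix x y assume xy: "x \<in> SS n i k" "y \<in> SS n i k" "x \<noteq> y"
      show "(Path n x \<inter> W) \<inter> (Path n y \<inter> W) = {}"
      proof (rule ccontr)
        assume "(Path n x \<inter> W) \<inter> (Path n y \<inter> W) \<noteq> {}"
        then obtain \<omega> where "\<omega> \<in> Path n x" "\<omega> \<in> Path n y" by blast
        then have "\<And>m. m \<in> {..n} \<Longrightarrow> x m = y m" by (auto simp: Path_def)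
        then have "x = y" using xy by (intro PiE_ext[of x "{..n}" "\<lambda>_. {0,1::real}"]) (auto simp: SS_def)
        with xy show False by simp
      qed
    qed
    show "\<And>x. x \<in> SS n i k \<Longrightarrow> emeasure M (Path n x \<inter> W) \<noteq> \<infinity>" by simp
  qed
  finally show ?thesis .
qed


lemma markov: "measure M {\<omega>\<in>space M. \<forall>i\<le>Suc t. X i \<omega> = x i} * measure M {\<omega>\<in>space M. X t \<omega> = x t}
      = measure M {\<omega>\<in>space M. \<forall>i\<le>t. X i \<omega> = x i}
        * measure M {\<omega>\<in>space M. X t \<omega> = x t \<and> X (Suc t) \<omega> = x (Suc t)}"
  using cmc unfolding copula_markov_chain_def markov_chain_def by blast

lemma Rrel:
  "measure M {\<omega>\<in>space M. X 0 \<omega> = i \<and> X n \<omega> = k \<and> X (Suc n) \<omega> = j} * measure M {\<omega>\<in>space M. X n \<omega> = k}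
   = measure M {\<omega>\<in>space M. X 0 \<omega> = i \<and> X n \<omega> = k} * measure M {\<omega>\<in>space M. X n \<omega> = k \<and> X (Suc n) \<omega> = j}"
proof -
  let ?W = "{\<omega>\<in>space M. X (Suc n) \<omega> = j}"
  have W: "?W \<in> sets M" by measurable
  have e1: "{\<omega>\<in>space M. X 0 \<omega> = i \<and> X n \<omega> = k \<and> X (Suc n) \<omega> = j} = {\<omega>\<in>space M. X 0 \<omega> = i \<and> X n \<omega> = k} \<inter> ?W"
    by auto
  have e2: "{\<omega>\<in>space M. X 0 \<omega> = i \<and> X n \<omega> = k} = {\<omega>\<in>space M. X 0 \<omega> = i \<and> X n \<omega> = k} \<inter> space M"
    by auto
  have 3: "measure M (Path n x \<inter> ?W) * measure M {\<omega>\<in>space M. X n \<omega> = k}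
      = measure M (Path n x \<inter> space M) * measure M {\<omega>\<in>space M. X n \<omega> = k \<and> X (Suc n) \<omega> = j}"
    if x: "x \<in> SS n i k" for x
  proof -
    let ?y = "x(Suc n := j)"
    have xk: "x n = k" using x by (simp add: SS_def)
    have a1: "{\<omega>\<in>space M. \<forall>m\<le>Suc n. X m \<omega> = ?y m} = Path n x \<inter> ?W"
      by (auto simp: Path_def le_Suc_eq)
    have a2: "{\<omega>\<in>space M. \<forall>m\<le>n. X m \<omega> = ?y m} = Path n x \<inter> space M"
      by (auto simp: Path_def)
    show ?thesis using markov[of n ?y] a1 a2 xk by simp
  qed
  have "measure M {\<omega>\<in>space M. X 0 \<omega> = i \<and> X n \<omega> = k \<and> X (Suc n) \<omega> = j} * measure M {\<omega>\<in>space M. X n \<omega> = k}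
      = (\<Sum>x\<in>SS n i k. measure M (Path n x \<inter> ?W) * measure M {\<omega>\<in>space M. X n \<omega> = k})"
    by (simp only: e1 decomp[OF W] sum_distrib_right)
  also have "\<dots> = (\<Sum>x\<in>SS n i k. measure M (Path n x \<inter> space M) * measure M {\<omega>\<in>space M. X n \<omega> = k \<and> X (Suc n) \<omega> = j})"
    by (rule sum.cong[OF refl 3])
  also have "\<dots> = measure M {\<omega>\<in>space M. X 0 \<omega> = i \<and> X n \<omega> = k} * measure M {\<omega>\<in>space M. X n \<omega> = k \<and> X (Suc n) \<omega> = j}"
    by (subst e2, subst decomp) (auto simp: sum_distrib_right)
  finally show ?thesis .
qed

definition Q where "Q n i j = measure M {\<omega>\<in>space M. X 0 \<omega> = i \<and> X n \<omega> = j}"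

lemma Qsplit: "Q (Suc n) i j = measure M {\<omega>\<in>space M. X 0 \<omega> = i \<and> X n \<omega> = 0 \<and> X (Suc n) \<omega> = j}
    + measure M {\<omega>\<in>space M. X 0 \<omega> = i \<and> X n \<omega> = 1 \<and> X (Suc n) \<omega> = j}"
  unfolding Q_def by (rule split2) (use AEall in \<open>auto elim!: AE_mp\<close>)


lemma q_pos: "0 < q" using p1 by (simp add: q_def)
lemma pq: "p + q = 1" by (simp add: q_def)

lemma Rval: "measure M {\<omega>\<in>space M. X 0 \<omega> = i \<and> X n \<omega> = k \<and> X (Suc n) \<omega> = j}
   = Q n i k * measure M {\<omega>\<in>space M. X n \<omega> = k \<and> X (Suc n) \<omega> = j} / measure M {\<omega>\<in>space M. X n \<omega> = k}"
  if "measure M {\<omega>\<in>space M. X n \<omega> = k} \<noteq> 0"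
  using Rrel[of i n k j] that unfolding Q_def by (simp add: field_simps)

lemma Qrec0: "Q (Suc n) i 0 = Q n i 0 * c / q + Q n i 1 * (q - c) / p"
  using Qsplit[of n i 0] Rval[of n 0 i 0] Rval[of n 1 i 0] P0[of n] P1[of n] P00[of n] P10[of n] q_pos p0
  by (simp add: q_def)

lemma Qrec1: "Q (Suc n) i 1 = Q n i 0 * (q - c) / q + Q n i 1 * (p - (q - c)) / p"
  using Qsplit[of n i 1] Rval[of n 0 i 1] Rval[of n 1 i 1] P0[of n] P1[of n] P01[of n] P11[of n] q_pos p0
  by (simp add: q_def)

definition lam where "lam = 1 - (q - c) / (p * q)"

lemma Qform: "Q n 0 0 = q * (q + lam ^ n * p) \<and> Q n 0 1 = q * p * (1 - lam ^ n)
   \<and> Q n 1 0 = p * q * (1 - lam ^ n) \<and> Q n 1 1 = p * (p + lam ^ n * q)"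
proof (induction n)
  case 0
  have "Q 0 0 0 = q" using P0[of 0] by (simp add: Q_def q_def)
  moreover have "Q 0 1 1 = p" using P1[of 0] by (simp add: Q_def)
  moreover have e1: "{\<omega>\<in>space M. X 0 \<omega> = (0::real) \<and> X 0 \<omega> = 1} = {}" by auto
  moreover have e2: "{\<omega>\<in>space M. X 0 \<omega> = (1::real) \<and> X 0 \<omega> = 0} = {}" by auto
  moreover have "Q 0 0 1 = 0" unfolding Q_def by (subst e1) simp
  moreover have "Q 0 1 0 = 0" unfolding Q_def by (subst e2) simp
  ultimately show ?case by (simp add: q_def algebra_simps)
next
  case (Suc n)
  define s where "s = lam ^ n"
  have l: "lam ^ Suc n = lam * s" by (simp add: s_def)
  have ih: "Q n 0 0 = q * (q + s * p)" "Q n 0 1 = q * p * (1 - s)" "Q n 1 0 = p * q * (1 - s)"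
     "Q n 1 1 = p * (p + s * q)" using Suc.IH by (simp_all add: s_def)
  have pne: "p \<noteq> 0" using p0 by simp
  have qne: "q \<noteq> 0" using q_pos by simp
  have pq': "p = 1 - q" using pq by simp
  have L: "lam * (p * q) = p * q - (q - c)" using pne qne by (simp add: lam_def field_simps)
  have d1: "q * (q + s * p) * c / q = (q + s * p) * c" "q * p * (1 - s) * (q - c) / q = p * (1 - s) * (q - c)"
    "p * q * (1 - s) * (p - (q - c)) / p = q * (1 - s) * (p - (q - c))"
    "p * (p + s * q) * (q - c) / p = (p + s * q) * (q - c)"
    "q * (q + s * p) * (q - c) / q = (q + s * p) * (q - c)"
    "p * q * (1 - s) * c / q = p * (1 - s) * c"
    "q * p * (1 - s) * (p - (q - c)) / p = q * (1 - s) * (p - (q - c))"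
    "p * (p + s * q) * (p - (q - c)) / p = (p + s * q) * (p - (q - c))"
    "p * q * (1 - s) * (q - c) / p = q * (1 - s) * (q - c)"
    using pne qne by simp_all
  have t1: "q * (q + lam * s * p) = q * q + s * (p * q - (q - c))" by (subst L[symmetric]) (simp add: algebra_simps)
  have t2: "q * p * (1 - lam * s) = q * p - s * (p * q - (q - c))" by (subst L[symmetric]) (simp add: algebra_simps)
  have t3: "p * q * (1 - lam * s) = q * p - s * (p * q - (q - c))" by (subst L[symmetric]) (simp add: algebra_simps)
  have t4: "p * (p + lam * s * q) = p * p + s * (p * q - (q - c))" by (subst L[symmetric]) (simp add: algebra_simps)
  have g00: "Q (Suc n) 0 0 = q * (q + lam ^ Suc n * p)"
  proof -
    have "Q (Suc n) 0 0 = (q + s * p) * c + q * (1 - s) * (q - c)" using Qrec0[of n 0] ih d1 by simp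
    also have "\<dots> = q * q + s * (p * q - (q - c))" by (simp add: q_def algebra_simps)
    also have "\<dots> = q * (q + lam ^ Suc n * p)" by (simp only: l t1)
    finally show ?thesis .
  qed
  have g01: "Q (Suc n) 0 1 = q * p * (1 - lam ^ Suc n)"
  proof -
    have "Q (Suc n) 0 1 = (q + s * p) * (q - c) + q * (1 - s) * (p - (q - c))" using Qrec1[of n 0] ih d1 by simp
    also have "\<dots> = q * p - s * (p * q - (q - c))" by (simp add: q_def algebra_simps)
    also have "\<dots> = q * p * (1 - lam ^ Suc n)" by (simp only: l t2)
    finally show ?thesis .
  qed
  have g10: "Q (Suc n) 1 0 = p * q * (1 - lam ^ Suc n)"
  proof -
    have "Q (Suc n) 1 0 = p * (1 - s) * c + (p + s * q) * (q - c)" using Qrec0[of n 1] ih d1 by simp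
    also have "\<dots> = q * p - s * (p * q - (q - c))" by (simp add: q_def algebra_simps)
    also have "\<dots> = p * q * (1 - lam ^ Suc n)" by (simp only: l t3)
    finally show ?thesis .
  qed
  have g11: "Q (Suc n) 1 1 = p * (p + lam ^ Suc n * q)"
  proof -
    have "Q (Suc n) 1 1 = p * (1 - s) * (q - c) + (p + s * q) * (p - (q - c))" using Qrec1[of n 1] ih d1 by simp
    also have "\<dots> = p * p + s * (p * q - (q - c))" by (simp add: q_def algebra_simps)
    also have "\<dots> = p * (p + lam ^ Suc n * q)" by (simp only: l t4)
    finally show ?thesis .
  qed
  show ?case using g00 g01 g10 g11 by blast
qed


lemma lam_bounds: "\<bar>lam\<bar> < 1"
proof (cases "q + q - 1 \<le> 0")
  case True
  then have cc: "c = a * q" by (simp add: c_def mix_copula_def)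
  have "lam = 1 - (1 - a) / p" using p0 q_pos by (simp add: lam_def cc field_simps)
  moreover have "0 < (1 - a) / p" using a1 p0 by simp
  moreover have "(1 - a) / p < 2" using True a0 p0 by (simp add: pos_divide_less_eq q_def)
  ultimately show ?thesis by linarith
next
  case False
  then have cc: "c = a * q + (1 - a) * (q + q - 1)" by (simp add: c_def mix_copula_def)
  have "lam = 1 - (1 - a) / q" using p0 q_pos by (simp add: lam_def cc field_simps q_def)
  moreover have "0 < (1 - a) / q" using a1 q_pos by simp
  moreover have "(1 - a) / q < 2" using False a0 q_pos by (simp add: pos_divide_less_eq)
  ultimately show ?thesis by linarith
qed


lemma AE2: "AE \<omega> in M. (X 0 \<omega> = 0 \<or> X 0 \<omega> = 1) \<and> (X n \<omega> = 0 \<or> X n \<omega> = 1)"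
  using AEall by eventually_elim auto

lemma intQ:
  assumes "(\<lambda>\<omega>. h (X 0 \<omega>) (X n \<omega>)) \<in> borel_measurable M"
  shows "(\<integral>\<omega>. h (X 0 \<omega>) (X n \<omega>) \<partial>M) = h 0 0 * Q n 0 0 + h 0 1 * Q n 0 1 + (h 1 0 * Q n 1 0 + h 1 1 * Q n 1 1)"
  using int2[OF meas meas AE2 assms] by (simp add: Q_def)

lemma pv_int:
  assumes [measurable]: "A \<in> sets borel" shows "pv M (X t) A = (\<integral>\<omega>. indicator A (X t \<omega>) \<partial>M)"
proof -
  have "pv M (X t) A = (\<integral>\<omega>. indicator (X t -` A \<inter> space M) \<omega> \<partial>M)"
    unfolding pv_def by (simp add: Int_absorb2 Int_assoc)
  also have "\<dots> = (\<integral>\<omega>. indicator A (X t \<omega>) \<partial>M)"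
    by (rule Bochner_Integration.integral_cong) (auto simp: indicator_def)
  finally show ?thesis .
qed

lemma pv2_int:
  assumes [measurable]: "A \<in> sets borel" "B \<in> sets borel"
  shows "pv2 M (X t) A (X u) B = (\<integral>\<omega>. indicator A (X t \<omega>) * indicator B (X u \<omega>) \<partial>M)"
proof -
  have "pv2 M (X t) A (X u) B = (\<integral>\<omega>. indicator (X t -` A \<inter> X u -` B \<inter> space M) \<omega> \<partial>M)"
    unfolding pv2_def by (simp add: Int_absorb2 Int_assoc)
  also have "\<dots> = (\<integral>\<omega>. indicator A (X t \<omega>) * indicator B (X u \<omega>) \<partial>M)"
    by (rule Bochner_Integration.integral_cong) (auto simp: indicator_def)
  finally show ?thesis .
qed

lemma pvA: assumes [measurable]: "A \<in> sets borel"
  shows "pv M (X 0) A = indicator A 0 * q + indicator A 1 * p"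
proof -
  have "pv M (X 0) A = (\<integral>\<omega>. (\<lambda>i j. indicator A i) (X 0 \<omega>) (X n \<omega>) \<partial>M)"
    by (simp add: pv_int)
  also have "\<dots> = indicator A 0 * q + indicator A 1 * p"
    by (subst intQ) (auto simp: Qform q_def algebra_simps)
  finally show ?thesis .
qed

lemma pvB: assumes [measurable]: "B \<in> sets borel"
  shows "pv M (X n) B = indicator B 0 * q + indicator B 1 * p"
proof -
  have "pv M (X n) B = (\<integral>\<omega>. (\<lambda>i j. indicator B j) (X 0 \<omega>) (X n \<omega>) \<partial>M)"
    by (simp add: pv_int)
  also have "\<dots> = indicator B 0 * q + indicator B 1 * p"
    by (subst intQ) (auto simp: Qform q_def algebra_simps)
  finally show ?thesis .
qed

lemma pvAB: assumes [measurable]: "A \<in> sets borel" "B \<in> sets borel"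
  shows "pv2 M (X 0) A (X n) B - pv M (X 0) A * pv M (X n) B
     = lam ^ n * p * q * (indicator A 0 - indicator A 1) * (indicator B 0 - indicator B 1)"
proof -
  have "pv2 M (X 0) A (X n) B = (\<integral>\<omega>. (\<lambda>i j. indicator A i * indicator B j) (X 0 \<omega>) (X n \<omega>) \<partial>M)"
    by (simp add: pv2_int)
  also have "\<dots> = indicator A 0 * indicator B 0 * Q n 0 0 + indicator A 0 * indicator B 1 * Q n 0 1
     + (indicator A 1 * indicator B 0 * Q n 1 0 + indicator A 1 * indicator B 1 * Q n 1 1)"
    by (subst intQ) auto
  finally show ?thesis
    by (simp add: pvA pvB Qform q_def algebra_simps)
qed


lemma pq_le: "p * q \<le> p" "p * q \<le> q" "0 < p * q" "p * q \<le> 1"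
  using p0 p1 q_pos by (auto simp: q_def mult_le_one)

lemma ind_diff_le: "\<bar>indicator A (0::real) - indicator A 1\<bar> \<le> (1::real)"
  by (auto simp: indicator_def)

lemma ind_diff_pv: "\<bar>indicator A (0::real) - indicator A 1\<bar> * (p * q) \<le> indicator A 0 * q + indicator A 1 * p"
  using pq_le by (auto simp: indicator_def)

lemma D_abs: assumes "A \<in> sets borel" "B \<in> sets borel"
  shows "\<bar>pv2 M (X 0) A (X n) B - pv M (X 0) A * pv M (X n) B\<bar>
     = \<bar>lam\<bar> ^ n * (p * q) * \<bar>indicator A (0::real) - indicator A 1\<bar> * \<bar>indicator B (0::real) - indicator B 1\<bar>"
  using pq_le by (simp add: pvAB[OF assms] abs_mult power_abs)

lemma alpha_bound: assumes "A \<in> sets borel" "B \<in> sets borel"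
  shows "\<bar>pv2 M (X 0) A (X n) B - pv M (X 0) A * pv M (X n) B\<bar> \<le> \<bar>lam\<bar> ^ n"
proof -
  have "\<bar>lam\<bar> ^ n * (p * q) * \<bar>indicator A (0::real) - indicator A 1\<bar> * \<bar>indicator B (0::real) - indicator B 1\<bar>
     \<le> \<bar>lam\<bar> ^ n * 1 * 1 * 1"
    using pq_le ind_diff_le[of A] ind_diff_le[of B]
    by (intro mult_mono) auto
  then show ?thesis using D_abs[OF assms] by simp
qed

lemma phi_bound: assumes "A \<in> sets borel" "B \<in> sets borel" "pv M (X 0) A > 0"
  shows "\<bar>pv2 M (X 0) A (X n) B / pv M (X 0) A - pv M (X n) B\<bar> \<le> \<bar>lam\<bar> ^ n"
proof -
  let ?PA = "pv M (X 0) A"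
  have e: "pv2 M (X 0) A (X n) B / ?PA - pv M (X n) B = (pv2 M (X 0) A (X n) B - ?PA * pv M (X n) B) / ?PA"
    using assms(3) by (simp add: diff_divide_distrib)
  have "\<bar>lam\<bar> ^ n * (p * q) * \<bar>indicator A (0::real) - indicator A 1\<bar> * \<bar>indicator B (0::real) - indicator B 1\<bar>
     = \<bar>lam\<bar> ^ n * (\<bar>indicator A (0::real) - indicator A 1\<bar> * (p * q)) * \<bar>indicator B (0::real) - indicator B 1\<bar>"
    by (simp add: algebra_simps)
  also have "\<dots> \<le> \<bar>lam\<bar> ^ n * ?PA * 1"
  proof (rule mult_mono)
    show "\<bar>lam\<bar> ^ n * (\<bar>indicator A (0::real) - indicator A 1 :: real\<bar> * (p * q)) \<le> \<bar>lam\<bar> ^ n * ?PA"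
      by (rule mult_left_mono) (use ind_diff_pv[of A] pvA[OF assms(1)] in auto)
    show "\<bar>indicator B (0::real) - indicator B 1 :: real\<bar> \<le> 1" by (auto simp: indicator_def)
    show "0 \<le> \<bar>lam\<bar> ^ n * ?PA" using assms(3) by simp
    show "0 \<le> \<bar>indicator B (0::real) - indicator B 1 :: real\<bar>" by simp
  qed
  finally have "\<bar>pv2 M (X 0) A (X n) B - ?PA * pv M (X n) B\<bar> \<le> \<bar>lam\<bar> ^ n * ?PA"
    using D_abs[OF assms(1,2)] by simp
  then have "\<bar>pv2 M (X 0) A (X n) B - ?PA * pv M (X n) B\<bar> / ?PA \<le> \<bar>lam\<bar> ^ n"
    using assms(3) by (simp add: divide_le_eq)
  then show ?thesis using assms(3) unfolding e by (simp add: abs_divide)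
qed

lemma psi_bound: assumes "A \<in> sets borel" "B \<in> sets borel" "pv M (X 0) A > 0" "pv M (X n) B > 0"
  shows "\<bar>pv2 M (X 0) A (X n) B / (pv M (X 0) A * pv M (X n) B) - 1\<bar> \<le> \<bar>lam\<bar> ^ n / (p * q)"
proof -
  let ?PA = "pv M (X 0) A" and ?PB = "pv M (X n) B"
  have pos: "0 < ?PA * ?PB" using assms by simp
  have e: "pv2 M (X 0) A (X n) B / (?PA * ?PB) - 1 = (pv2 M (X 0) A (X n) B - ?PA * ?PB) / (?PA * ?PB)"
    using assms(3,4) by (simp add: diff_divide_distrib)
  have "\<bar>pv2 M (X 0) A (X n) B - ?PA * ?PB\<bar> * (p * q)
     = \<bar>lam\<bar> ^ n * (\<bar>indicator A (0::real) - indicator A 1\<bar> * (p * q)) * (\<bar>indicator B (0::real) - indicator B 1\<bar> * (p * q))"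
  proof -
    have "\<bar>pv2 M (X 0) A (X n) B - ?PA * ?PB\<bar> * (p * q) = (\<bar>lam\<bar> ^ n * (p * q) * \<bar>indicator A (0::real) - indicator A 1\<bar> * \<bar>indicator B (0::real) - indicator B 1\<bar>) * (p * q)"
      using D_abs[OF assms(1,2), of n] by simp
    then show ?thesis by (simp add: algebra_simps)
  qed
  also have "\<dots> \<le> \<bar>lam\<bar> ^ n * ?PA * ?PB"
  proof (rule mult_mono)
    show "\<bar>lam\<bar> ^ n * (\<bar>indicator A (0::real) - indicator A 1 :: real\<bar> * (p * q)) \<le> \<bar>lam\<bar> ^ n * ?PA"
      by (rule mult_left_mono) (use ind_diff_pv[of A] pvA[OF assms(1)] in auto)
    show "\<bar>indicator B (0::real) - indicator B 1 :: real\<bar> * (p * q) \<le> ?PB"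
      using ind_diff_pv[of B] pvB[OF assms(2)] by auto
    show "0 \<le> \<bar>lam\<bar> ^ n * ?PA" using assms(3) by simp
    show "0 \<le> \<bar>indicator B (0::real) - indicator B 1 :: real\<bar> * (p * q)" using pq_le(3) by simp
  qed
  finally have *: "\<bar>pv2 M (X 0) A (X n) B - ?PA * ?PB\<bar> * (p * q) \<le> \<bar>lam\<bar> ^ n * ?PA * ?PB" .
  have pqne: "p * q \<noteq> 0" using p0 q_pos by simp
  have "\<bar>pv2 M (X 0) A (X n) B - ?PA * ?PB\<bar> / (?PA * ?PB)
      = (\<bar>pv2 M (X 0) A (X n) B - ?PA * ?PB\<bar> * (p * q)) / ((?PA * ?PB) * (p * q))"
    using pqne by simp
  also have "\<dots> \<le> (\<bar>lam\<bar> ^ n * ?PA * ?PB) / ((?PA * ?PB) * (p * q))"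
    by (rule divide_right_mono[OF *]) (use pos pq_le(3) in simp)
  also have "\<dots> = \<bar>lam\<bar> ^ n / (p * q)"
    using assms(3,4) by simp
  finally have **: "\<bar>pv2 M (X 0) A (X n) B - ?PA * ?PB\<bar> / (?PA * ?PB) \<le> \<bar>lam\<bar> ^ n / (p * q)" .
  have "\<bar>(pv2 M (X 0) A (X n) B - ?PA * ?PB) / (?PA * ?PB)\<bar> = \<bar>pv2 M (X 0) A (X n) B - ?PA * ?PB\<bar> / (?PA * ?PB)"
    using pos by (simp add: abs_divide)
  then show ?thesis unfolding e using ** by linarith
qed

lemma sum_ind_partition:
  assumes "disjoint_family_on A {..<(k::nat)}" "(\<Union>i<k. A i) = UNIV"
  shows "(\<Sum>i<k. indicator (A i) x) = (1::real)"
proof -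
  have "indicator (\<Union>(A ` {..<k})) x = (\<Sum>i<k. indicator (A i) x :: real)"
    by (rule indicator_UN_disjoint) (use assms in auto)
  then show ?thesis using assms(2) by simp
qed

lemma sum_ind_diff:
  assumes "disjoint_family_on A {..<(k::nat)}" "(\<Union>i<k. A i) = UNIV"
  shows "(\<Sum>i<k. \<bar>indicator (A i) (0::real) - indicator (A i) 1\<bar>) \<le> (2::real)"
proof -
  have "(\<Sum>i<k. \<bar>indicator (A i) (0::real) - indicator (A i) 1\<bar>) \<le> (\<Sum>i<k. indicator (A i) (0::real) + indicator (A i) 1 :: real)"
    by (rule sum_mono) (simp add: indicator_def)
  also have "\<dots> = 2" using sum_ind_partition[OF assms, of 0] sum_ind_partition[OF assms, of 1]
    by (simp add: sum.distrib)
  finally show ?thesis .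
qed


lemma beta_bound:
  assumes A: "\<forall>i<k. A i \<in> sets borel" "disjoint_family_on A {..<(k::nat)}" "(\<Union>i<k. A i) = UNIV"
    and B: "\<forall>j<l. B j \<in> sets borel" "disjoint_family_on B {..<(l::nat)}" "(\<Union>j<l. B j) = UNIV"
  shows "(\<Sum>i<k. \<Sum>j<l. \<bar>pv2 M (X 0) (A i) (X n) (B j) - pv M (X 0) (A i) * pv M (X n) (B j)\<bar>)
     \<le> 4 * \<bar>lam\<bar> ^ n"
proof -
  let ?a = "\<lambda>i. \<bar>indicator (A i) (0::real) - indicator (A i) 1 :: real\<bar>"
  let ?b = "\<lambda>j. \<bar>indicator (B j) (0::real) - indicator (B j) 1 :: real\<bar>"
  have "(\<Sum>i<k. \<Sum>j<l. \<bar>pv2 M (X 0) (A i) (X n) (B j) - pv M (X 0) (A i) * pv M (X n) (B j)\<bar>)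
      = (\<Sum>i<k. \<Sum>j<l. (\<bar>lam\<bar> ^ n * (p * q)) * (?a i * ?b j))"
    by (intro sum.cong refl) (use A(1) B(1) in \<open>simp add: D_abs mult.assoc\<close>)
  also have "\<dots> = (\<bar>lam\<bar> ^ n * (p * q)) * ((\<Sum>i<k. ?a i) * (\<Sum>j<l. ?b j))"
  proof -
    have "(\<Sum>i<k. \<Sum>j<l. (\<bar>lam\<bar> ^ n * (p * q)) * (?a i * ?b j)) = (\<bar>lam\<bar> ^ n * (p * q)) * (\<Sum>i<k. \<Sum>j<l. ?a i * ?b j)"
      by (simp add: sum_distrib_left)
    also have "(\<Sum>i<k. \<Sum>j<l. ?a i * ?b j) = (\<Sum>i<k. ?a i) * (\<Sum>j<l. ?b j)"
      by (rule sum_product[symmetric])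
    finally show ?thesis .
  qed
  also have "\<dots> \<le> (\<bar>lam\<bar> ^ n * 1) * (2 * 2)"
  proof (rule mult_mono)
    show "\<bar>lam\<bar> ^ n * (p * q) \<le> \<bar>lam\<bar> ^ n * 1" using pq_le(4) by (intro mult_left_mono) auto
    show "(\<Sum>i<k. ?a i) * (\<Sum>j<l. ?b j) \<le> 2 * 2"
      using sum_ind_diff[OF A(2,3)] sum_ind_diff[OF B(2,3)]
      by (intro mult_mono) (auto intro: sum_nonneg)
    show "0 \<le> \<bar>lam\<bar> ^ n * 1" by simp
    show "0 \<le> (\<Sum>i<k. ?a i) * (\<Sum>j<l. ?b j)" by (intro mult_nonneg_nonneg sum_nonneg) auto
  qed
  finally show ?thesis by simp
qed

lemma intf: assumes [measurable]: "f \<in> borel_measurable borel"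
  shows "(\<integral>\<omega>. f (X 0 \<omega>) \<partial>M) = f 0 * q + f 1 * p"
proof -
  have m: "(\<lambda>\<omega>. f (X 0 \<omega>)) \<in> borel_measurable M" by measurable
  have "(\<integral>\<omega>. f (X 0 \<omega>) \<partial>M) = f 0 * Q 0 0 0 + f 0 * Q 0 0 1 + (f 1 * Q 0 1 0 + f 1 * Q 0 1 1)"
    using intQ[of "\<lambda>i j. f i" 0] m by simp
  then show ?thesis by (simp add: Qform q_def algebra_simps)
qed

lemma intg: assumes [measurable]: "g \<in> borel_measurable borel"
  shows "(\<integral>\<omega>. g (X n \<omega>) \<partial>M) = g 0 * q + g 1 * p"
proof -
  have m: "(\<lambda>\<omega>. g (X n \<omega>)) \<in> borel_measurable M" by measurable
  have "(\<integral>\<omega>. g (X n \<omega>) \<partial>M) = g 0 * Q n 0 0 + g 1 * Q n 0 1 + (g 0 * Q n 1 0 + g 1 * Q n 1 1)"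
    using intQ[of "\<lambda>i j. g j" n] m by simp
  then show ?thesis by (simp add: Qform q_def algebra_simps)
qed

lemma varf: assumes [measurable]: "f \<in> borel_measurable borel"
  shows "(\<integral>\<omega>. (f (X 0 \<omega>) - (\<integral>\<eta>. f (X 0 \<eta>) \<partial>M))\<^sup>2 \<partial>M) = (f 1 - f 0)\<^sup>2 * (p * q)"
proof -
  have "(\<integral>\<omega>. (f (X 0 \<omega>) - (\<integral>\<eta>. f (X 0 \<eta>) \<partial>M))\<^sup>2 \<partial>M)
     = (\<integral>\<omega>. (\<lambda>i j. (f i - (f 0 * q + f 1 * p))\<^sup>2) (X 0 \<omega>) (X n \<omega>) \<partial>M)" by (simp add: intf)
  also have "\<dots> = (f 1 - f 0)\<^sup>2 * (p * q)"
    by (subst intQ) (auto simp: Qform q_def algebra_simps power2_eq_square)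
  finally show ?thesis .
qed

lemma varg: assumes [measurable]: "g \<in> borel_measurable borel"
  shows "(\<integral>\<omega>. (g (X n \<omega>) - (\<integral>\<eta>. g (X n \<eta>) \<partial>M))\<^sup>2 \<partial>M) = (g 1 - g 0)\<^sup>2 * (p * q)"
proof -
  have "(\<integral>\<omega>. (g (X n \<omega>) - (\<integral>\<eta>. g (X n \<eta>) \<partial>M))\<^sup>2 \<partial>M)
     = (\<integral>\<omega>. (\<lambda>i j. (g j - (g 0 * q + g 1 * p))\<^sup>2) (X 0 \<omega>) (X n \<omega>) \<partial>M)" by (simp add: intg)
  also have "\<dots> = (g 1 - g 0)\<^sup>2 * (p * q)"
    by (subst intQ) (auto simp: Qform q_def algebra_simps power2_eq_square)
  finally show ?thesis .
qed

lemma covfg: assumes [measurable]: "f \<in> borel_measurable borel" "g \<in> borel_measurable borel"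
  shows "(\<integral>\<omega>. (f (X 0 \<omega>) - (\<integral>\<eta>. f (X 0 \<eta>) \<partial>M)) * (g (X n \<omega>) - (\<integral>\<eta>. g (X n \<eta>) \<partial>M)) \<partial>M)
     = lam ^ n * (p * q) * (f 1 - f 0) * (g 1 - g 0)"
proof -
  have "(\<integral>\<omega>. (f (X 0 \<omega>) - (\<integral>\<eta>. f (X 0 \<eta>) \<partial>M)) * (g (X n \<omega>) - (\<integral>\<eta>. g (X n \<eta>) \<partial>M)) \<partial>M)
     = (\<integral>\<omega>. (\<lambda>i j. (f i - (f 0 * q + f 1 * p)) * (g j - (g 0 * q + g 1 * p))) (X 0 \<omega>) (X n \<omega>) \<partial>M)"
    by (simp add: intf intg)
  also have "\<dots> = lam ^ n * (p * q) * (f 1 - f 0) * (g 1 - g 0)"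
    by (subst intQ) (auto simp: Qform q_def algebra_simps)
  finally show ?thesis .
qed


lemma rho_bound: assumes [measurable]: "f \<in> borel_measurable borel" "g \<in> borel_measurable borel"
  shows "\<bar>(\<integral>\<omega>. (f (X 0 \<omega>) - (\<integral>\<eta>. f (X 0 \<eta>) \<partial>M)) * (g (X n \<omega>) - (\<integral>\<eta>. g (X n \<eta>) \<partial>M)) \<partial>M)
      / sqrt ((\<integral>\<omega>. (f (X 0 \<omega>) - (\<integral>\<eta>. f (X 0 \<eta>) \<partial>M))\<^sup>2 \<partial>M)
              * (\<integral>\<omega>. (g (X n \<omega>) - (\<integral>\<eta>. g (X n \<eta>) \<partial>M))\<^sup>2 \<partial>M))\<bar> \<le> \<bar>lam\<bar> ^ n"
proof -
  define u where "u = (f 1 - f 0) * (g 1 - g 0)"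
  have pqp: "0 < p * q" by (rule pq_le(3))
  have e: "(f 1 - f 0)\<^sup>2 * (p * q) * ((g 1 - g 0)\<^sup>2 * (p * q)) = (u * (p * q))\<^sup>2"
    by (simp add: u_def power2_eq_square algebra_simps)
  have sq: "sqrt ((f 1 - f 0)\<^sup>2 * (p * q) * ((g 1 - g 0)\<^sup>2 * (p * q))) = \<bar>u\<bar> * (p * q)"
    unfolding e using p0 q_pos by (simp add: abs_mult)
  have c: "lam ^ n * (p * q) * (f 1 - f 0) * (g 1 - g 0) = lam ^ n * u * (p * q)"
    by (simp add: u_def algebra_simps)
  have "\<bar>lam ^ n * u * (p * q) / (\<bar>u\<bar> * (p * q))\<bar> \<le> \<bar>lam\<bar> ^ n"
  proof (cases "u = 0")
    case True then show ?thesis by simp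
  next
    case False
    then have "\<bar>lam ^ n * u * (p * q) / (\<bar>u\<bar> * (p * q))\<bar> = \<bar>lam\<bar> ^ n"
      using p0 q_pos by (simp add: abs_mult power_abs abs_divide)
    then show ?thesis by simp
  qed
  then show ?thesis by (simp only: covfg[OF assms] varf[OF assms(1)] varg[OF assms(2)] sq c)
qed

end

lemma exp_decayI:
  assumes "0 \<le> r" "r < 1" "\<And>n. c n \<le> ereal (K * r ^ n)"
  shows "exp_decay c"
  unfolding exp_decay_def using assms by blast

theorem theorem2:
  fixes M :: "'a measure" and X :: "nat \<Rightarrow> 'a \<Rightarrow> real" and a p :: real
  assumes "0 < a" "a < 1" "0 < p" "p < 1"
    and "copula_markov_chain M X (mix_copula a) (bernoulli_cdf p)"
  shows "exp_decay (psi_mix M X) \<and> exp_decay (phi_mix M X) \<and> exp_decay (rho_mix M X)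
         \<and> exp_decay (beta_mix M X) \<and> exp_decay (alpha_mix M X)"
proof -
  interpret bchain M X a p using assms by unfold_locales
  have r0: "0 \<le> \<bar>lam\<bar>" by simp
  have r1: "\<bar>lam\<bar> < 1" by (rule lam_bounds)
  have psi: "exp_decay (psi_mix M X)"
  proof (rule exp_decayI[OF r0 r1])
    fix n
    show "psi_mix M X n \<le> ereal (1 / (p * q) * \<bar>lam\<bar> ^ n)"
      unfolding psi_mix_def by (rule SUP_least) (auto intro!: psi_bound)
  qed
  have phi: "exp_decay (phi_mix M X)"
  proof (rule exp_decayI[OF r0 r1])
    fix n
    show "phi_mix M X n \<le> ereal (1 * \<bar>lam\<bar> ^ n)"
      unfolding phi_mix_def by (rule SUP_least) (auto intro!: phi_bound)
  qed
  have alpha: "exp_decay (alpha_mix M X)"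
  proof (rule exp_decayI[OF r0 r1])
    fix n
    show "alpha_mix M X n \<le> ereal (1 * \<bar>lam\<bar> ^ n)"
      unfolding alpha_mix_def by (rule SUP_least) (auto intro!: alpha_bound)
  qed
  have beta: "exp_decay (beta_mix M X)"
  proof (rule exp_decayI[OF r0 r1])
    fix n
    show "beta_mix M X n \<le> ereal (2 * \<bar>lam\<bar> ^ n)"
      unfolding beta_mix_def by (rule SUP_least) (auto intro!: beta_bound)
  qed
  have rho: "exp_decay (rho_mix M X)"
  proof (rule exp_decayI[OF r0 r1])
    fix n
    show "rho_mix M X n \<le> ereal (1 * \<bar>lam\<bar> ^ n)"
      unfolding rho_mix_def
      by (rule SUP_least) (clarify, unfold ereal_less_eq(3) case_prod_conv, rule order_trans[OF rho_bound], auto)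
  qed
  show ?thesis using psi phi rho beta alpha by blast
qed

end
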